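(* Let $n\ge 2$, let $A$ be a Hermitian matrix of order $n$ and $\mathcal{O}\in\mathcal{C}_{sp}^{(n)}$. Let $A'$ be obtained from $A$ by applying one sweep ($N=n(n-1)/2$ steps) of the cyclic complex Jacobi method defined by $I_{\mathcal{O}}$. If all rotation angles satisfy $\phi_k\in[-\pi/4,\pi/4]$, $k\ge0$, then there is a constant $\gamma_n$ depending only on $n$ such that $S^2(A')\le\gamma_nS^2(A)$, $0\le\gamma_n<1$.
   Context: $\imath=\sqrt{-1}$. For $1\le i<j\le n$ and real $\phi,\alpha$, $R(i,j,\phi,\alpha)$ is the $n\times n$ matrix equal to $I_n$ except for entries $(i,i)=(j,j)=\cos\phi$, $(i,j)=-e^{\imath\alpha}\sin\phi$, $(j,i)=e^{-\imath\alpha}\sin\phi$. The off-norm is $S(X)=\|X-\mathrm{diag}(X)\|_F$. The complex Jacobi method on Hermitian $A$ is the iteration $A^{(0)}=A$, $A^{(k+1)}=U_k^*A^{(k)}U_k$, with $U_k=R(i_k,j_k,\phi_k,\alpha_k)$ and angles chosen so that the entry $(i_k,j_k)$ (hence also $(j_k,i_k)$) of $A^{(k+1)}$ is zero. Let $\mathcal{P}_n=\{(r,s):1\le r<s\le n\}$, $N=n(n-1)/2$. For an ordering $\mathcal{O}=(i_0,j_0),\dots,(i_{N-1},j_{N-1})$ of $\mathcal{P}_n$ (each pair exactly once), the cyclic strategy $I_{\mathcal{O}}$ uses $(i_{k\bmod N},j_{k\bmod N})$ as $k$-th pivot pair; a sweep is $N$ consecutive steps. $\mathcal{C}_c^{(n)}$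 is the set of orderings $(1,2),(\tau_3(1),3),(\tau_3(2),3),\dots,(\tau_n(1),n),\dots,(\tau_n(n-1),n)$, $\tau_j$ a permutation of $\{1,\dots,j-1\}$; $\mathcal{C}_r^{(n)}$ is the set of orderings $(n-1,n),(n-2,\tau_{n-2}(n-1)),(n-2,\tau_{n-2}(n)),\dots,(1,\tau_1(2)),\dots,(1,\tau_1(n))$, $\tau_i$ a permutation of $\{i+1,\dots,n\}$. The reverse of $(i_0,j_0),\dots,(i_r,j_r)$ is $(i_r,j_r),\dots,(i_0,j_0)$; $\overleftarrow{\mathcal{C}}_c^{(n)}$, $\overleftarrow{\mathcal{C}}_r^{(n)}$ are the sets of reverses of orderings in $\mathcal{C}_c^{(n)}$, $\mathcal{C}_r^{(n)}$, and $\mathcal{C}_{sp}^{(n)}=\mathcal{C}_c^{(n)}\cup\overleftarrow{\mathcal{C}}_c^{(n)}\cup\mathcal{C}_r^{(n)}\cup\overleftarrow{\mathcal{C}}_r^{(n)}$. *)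

theory Defs
  imports "Jordan_Normal_Form.Matrix"
begin

text \<open>Indices are 0-based: the paper's index r in 1..n corresponds to r-1 in 0..n-1.\<close>

definition ctrans :: "complex mat \<Rightarrow> complex mat" where
  "ctrans A = mat (dim_col A) (dim_row A) (\<lambda>(r,s). cnj (A $$ (s,r)))"

definition hermitian_mat :: "nat \<Rightarrow> complex mat \<Rightarrow> bool" where
  "hermitian_mat n A \<longleftrightarrow> A \<in> carrier_mat n n \<and> ctrans A = A"

definition rot :: "nat \<Rightarrow> nat \<Rightarrow> nat \<Rightarrow> real \<Rightarrow> real \<Rightarrow> complex mat" where
  "rot n i j \<phi> \<alpha> = mat n n (\<lambda>(r,s).
     if (r = i \<and> s = i) \<or> (r = j \<and> s = j) then complex_of_real (cos \<phi>)
     else if r = i \<and> s = j then - exp (\<i> * complex_of_real \<alpha>) * complex_of_real (sin \<phi>)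
     else if r = j \<and> s = i then exp (- (\<i> * complex_of_real \<alpha>)) * complex_of_real (sin \<phi>)
     else if r = s then 1 else 0)"

definition off2 :: "complex mat \<Rightarrow> real" where
  "off2 X = (\<Sum>r<dim_row X. \<Sum>s<dim_col X. if r = s then 0 else (cmod (X $$ (r,s)))\<^sup>2)"

definition pivot_pairs :: "nat \<Rightarrow> (nat \<times> nat) set" where
  "pivot_pairs n = {(r,s). r < s \<and> s < n}"

text \<open>Column-cyclic orderings: blocks for columns 2..n (1..n-1 0-based), each block
  (tau_j(1),j),...,(tau_j(j-1),j) with tau_j a permutation of the rows above j.\<close>
definition C_c :: "nat \<Rightarrow> (nat \<times> nat) list set" where
  "C_c n = {ord. \<exists>\<tau> :: nat \<Rightarrow> nat list.
      (\<forall>j. distinct (\<tau> j) \<and> set (\<tau> j) = {0..<j}) \<and>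
      ord = concat (map (\<lambda>j. map (\<lambda>i. (i, j)) (\<tau> j)) [1..<n])}"

text \<open>Row-cyclic orderings: blocks for rows n-1 down to 1 (n-2 down to 0 0-based).\<close>
definition C_r :: "nat \<Rightarrow> (nat \<times> nat) list set" where
  "C_r n = {ord. \<exists>\<tau> :: nat \<Rightarrow> nat list.
      (\<forall>i. distinct (\<tau> i) \<and> set (\<tau> i) = {i<..<n}) \<and>
      ord = concat (map (\<lambda>i. map (\<lambda>j. (i, j)) (\<tau> i)) (rev [0..<n - 1]))}"

definition C_sp :: "nat \<Rightarrow> (nat \<times> nat) list set" where
  "C_sp n = C_c n \<union> rev ` C_c n \<union> C_r n \<union> rev ` C_r n"

definition jacobi_sweep :: "nat \<Rightarrow> (nat \<times> nat) list \<Rightarrow> complex mat \<Rightarrow> complex mat \<Rightarrow> bool" where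
  "jacobi_sweep n ord A A' \<longleftrightarrow>
     (\<exists>As :: nat \<Rightarrow> complex mat. \<exists>\<phi> \<alpha> :: nat \<Rightarrow> real.
        As 0 = A \<and> As (n * (n - 1) div 2) = A' \<and>
        (\<forall>k < n * (n - 1) div 2.
           (let (i, j) = ord ! k; U = rot n i j (\<phi> k) (\<alpha> k) in
              As (Suc k) = ctrans U * As k * U \<and>
              As (Suc k) $$ (i, j) = 0 \<and>
              - (pi / 4) \<le> \<phi> k \<and> \<phi> k \<le> pi / 4)))"

end

theory Submission
  imports Defs
begin

lemma sum2:
  fixes f :: "nat \<Rightarrow> 'a::comm_monoid_add"
  assumes "a \<noteq> b" "a < n" "b < n" "\<And>t. t < n \<Longrightarrow> t \<noteq> a \<Longrightarrow> t \<noteq> b \<Longrightarrow> f t = 0"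
  shows "(\<Sum>t<n. f t) = f a + f b"
proof -
  have "(\<Sum>t<n. f t) = (\<Sum>t\<in>{a,b}. f t)"
    by (rule sum.mono_neutral_right) (use assms in auto)
  then show ?thesis using assms(1) by simp
qed

lemma rot_dim[simp]: "rot n i j \<phi> \<alpha> \<in> carrier_mat n n" "dim_row (rot n i j \<phi> \<alpha>) = n" "dim_col (rot n i j \<phi> \<alpha>) = n"
  by (auto simp: rot_def)

lemma ctrans_dim[simp]: "dim_row (ctrans A) = dim_col A" "dim_col (ctrans A) = dim_row A"
  by (auto simp: ctrans_def)

lemma ctrans_idx[simp]: "r < dim_col A \<Longrightarrow> s < dim_row A \<Longrightarrow> ctrans A $$ (r,s) = cnj (A $$ (s,r))"
  by (auto simp: ctrans_def)

lemma rot_idx: "r < n \<Longrightarrow> s < n \<Longrightarrow> rot n i j \<phi> \<alpha> $$ (r,s) = (if (r = i \<and> s = i) \<or> (r = j \<and> s = j) then complex_of_real (cos \<phi>)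
     else if r = i \<and> s = j then - exp (\<i> * complex_of_real \<alpha>) * complex_of_real (sin \<phi>)
     else if r = j \<and> s = i then exp (- (\<i> * complex_of_real \<alpha>)) * complex_of_real (sin \<phi>)
     else if r = s then 1 else 0)"
  by (simp add: rot_def)

lemma prod_idx:
  fixes X :: "complex mat"
  assumes X: "X \<in> carrier_mat n n" and r: "r < n" and t: "t < n" and U: "U \<in> carrier_mat n n"
  shows "(ctrans U * X * U) $$ (r,t) = (\<Sum>v<n. (\<Sum>u<n. cnj (U $$ (u,r)) * X $$ (u,v)) * U $$ (v,t))"
  using X r t U by (simp add: scalar_prod_def atLeast0LessThan)

lemma herm_idx: assumes "hermitian_mat n X" "r < n" "s < n" shows "X $$ (s,r) = cnj (X $$ (r,s))"
proof -
  have c: "X \<in> carrier_mat n n" and e: "ctrans X = X" using assms(1) by (auto simp: hermitian_mat_def)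
  have "ctrans X $$ (s,r) = cnj (X $$ (r,s))" by (rule ctrans_idx) (use c assms in auto)
  then show ?thesis by (simp only: e)
qed

lemma herm_cmod: "hermitian_mat n X \<Longrightarrow> r < n \<Longrightarrow> s < n \<Longrightarrow> cmod (X $$ (s,r)) = cmod (X $$ (r,s))"
  using herm_idx[of n X r s] by simp

lemma herm_intro:
  assumes c: "Y \<in> carrier_mat n n" and h: "\<And>r s. r < n \<Longrightarrow> s < n \<Longrightarrow> Y $$ (s,r) = cnj (Y $$ (r,s))"
  shows "hermitian_mat n Y"
  unfolding hermitian_mat_def
proof (intro conjI eq_matI)
  show "Y \<in> carrier_mat n n" by fact
  fix r s assume r: "r < dim_row Y" and s: "s < dim_col Y"
  then have "ctrans Y $$ (r,s) = cnj (Y $$ (s,r))" using c by simp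
  also have "\<dots> = Y $$ (r,s)" using h[of s r] r s c by simp
  finally show "ctrans Y $$ (r,s) = Y $$ (r,s)" .
qed (use c in auto)

lemma prod_herm:
  fixes X U :: "complex mat"
  assumes X: "hermitian_mat n X" and U: "U \<in> carrier_mat n n"
  shows "hermitian_mat n (ctrans U * X * U)"
proof (rule herm_intro)
  have Xc: "X \<in> carrier_mat n n" using X by (simp add: hermitian_mat_def)
  show "ctrans U * X * U \<in> carrier_mat n n" using Xc U by auto
  fix r s assume r: "r < n" and s: "s < n"
  have "(ctrans U * X * U) $$ (s,r) = (\<Sum>v<n. \<Sum>u<n. cnj (U $$ (u,s)) * X $$ (u,v) * U $$ (v,r))"
    using prod_idx[OF Xc s r U] by (simp add: sum_distrib_right)
  also have "\<dots> = (\<Sum>u<n. \<Sum>v<n. cnj (U $$ (u,s)) * X $$ (u,v) * U $$ (v,r))"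
    by (rule sum.swap)
  also have "\<dots> = (\<Sum>u<n. \<Sum>v<n. cnj (cnj (U $$ (v,r)) * X $$ (v,u) * U $$ (u,s)))"
  proof (intro sum.cong refl)
    fix u v assume "u \<in> {..<n}" "v \<in> {..<n}"
    then have e: "X $$ (u,v) = cnj (X $$ (v,u))" using herm_idx[OF X, of v u] by simp
    show "cnj (U $$ (u,s)) * X $$ (u,v) * U $$ (v,r) = cnj (cnj (U $$ (v,r)) * X $$ (v,u) * U $$ (u,s))"
      by (simp add: e)
  qed
  also have "\<dots> = cnj ((ctrans U * X * U) $$ (r,s))"
    using prod_idx[OF Xc r s U] by (simp add: sum_distrib_right)
  finally show "(ctrans U * X * U) $$ (s,r) = cnj ((ctrans U * X * U) $$ (r,s))" .
qed

lemma rot_row: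
  fixes X :: "complex mat"
  assumes X: "X \<in> carrier_mat n n" and r: "r < n" "r \<noteq> i" "r \<noteq> j" and t: "t < n"
  shows "(ctrans (rot n i j \<phi> \<alpha>) * X * rot n i j \<phi> \<alpha>) $$ (r,t) = (\<Sum>v<n. X $$ (r,v) * rot n i j \<phi> \<alpha> $$ (v,t))"
proof -
  have "\<And>v. v < n \<Longrightarrow> (\<Sum>u<n. cnj (rot n i j \<phi> \<alpha> $$ (u,r)) * X $$ (u,v)) = X $$ (r,v)"
  proof -
    fix v assume v: "v < n"
    have "(\<Sum>u<n. cnj (rot n i j \<phi> \<alpha> $$ (u,r)) * X $$ (u,v)) = (\<Sum>u<n. if u = r then X $$ (r,v) else 0)"
      by (intro sum.cong refl) (use r in \<open>auto simp: rot_idx\<close>)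
    also have "\<dots> = X $$ (r,v)" using r by simp
    finally show "(\<Sum>u<n. cnj (rot n i j \<phi> \<alpha> $$ (u,r)) * X $$ (u,v)) = X $$ (r,v)" .
  qed
  then show ?thesis using prod_idx[OF X r(1) t rot_dim(1)] by simp
qed

lemma rot_row_other:
  fixes X :: "complex mat"
  assumes X: "X \<in> carrier_mat n n" and r: "r < n" "r \<noteq> i" "r \<noteq> j" and t: "t < n" "t \<noteq> i" "t \<noteq> j"
  shows "(ctrans (rot n i j \<phi> \<alpha>) * X * rot n i j \<phi> \<alpha>) $$ (r,t) = X $$ (r,t)"
proof -
  have "(\<Sum>v<n. X $$ (r,v) * rot n i j \<phi> \<alpha> $$ (v,t)) = (\<Sum>v<n. if v = t then X $$ (r,t) else 0)"
    by (intro sum.cong refl) (use t in \<open>auto simp: rot_idx\<close>)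
  then show ?thesis using rot_row[OF X r t(1)] t by simp
qed

lemma rot_row_i:
  fixes X :: "complex mat"
  assumes X: "X \<in> carrier_mat n n" and r: "r < n" "r \<noteq> i" "r \<noteq> j" and ij: "i < j" "j < n"
  shows "(ctrans (rot n i j \<phi> \<alpha>) * X * rot n i j \<phi> \<alpha>) $$ (r,i) =
     X $$ (r,i) * complex_of_real (cos \<phi>) + X $$ (r,j) * (exp (- (\<i> * complex_of_real \<alpha>)) * complex_of_real (sin \<phi>))"
proof -
  have "(\<Sum>v<n. X $$ (r,v) * rot n i j \<phi> \<alpha> $$ (v,i)) = X $$ (r,i) * rot n i j \<phi> \<alpha> $$ (i,i) + X $$ (r,j) * rot n i j \<phi> \<alpha> $$ (j,i)"
    by (rule sum2) (use ij in \<open>auto simp: rot_idx\<close>)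
  then show ?thesis using rot_row[OF X r, of i] ij by (simp add: rot_idx)
qed

lemma rot_row_j:
  fixes X :: "complex mat"
  assumes X: "X \<in> carrier_mat n n" and r: "r < n" "r \<noteq> i" "r \<noteq> j" and ij: "i < j" "j < n"
  shows "(ctrans (rot n i j \<phi> \<alpha>) * X * rot n i j \<phi> \<alpha>) $$ (r,j) =
     X $$ (r,i) * (- exp (\<i> * complex_of_real \<alpha>) * complex_of_real (sin \<phi>)) + X $$ (r,j) * complex_of_real (cos \<phi>)"
proof -
  have "(\<Sum>v<n. X $$ (r,v) * rot n i j \<phi> \<alpha> $$ (v,j)) = X $$ (r,i) * rot n i j \<phi> \<alpha> $$ (i,j) + X $$ (r,j) * rot n i j \<phi> \<alpha> $$ (j,j)"
    by (rule sum2) (use ij in \<open>auto simp: rot_idx\<close>)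
  then show ?thesis using rot_row[OF X r, of j] ij by (simp add: rot_idx)
qed

lemma alg_inv:
  fixes x y E :: complex and c s :: real
  assumes cs: "c^2 + s^2 = 1" and E: "E * cnj E = 1"
  shows "x = of_real c * (x * of_real c + y * (cnj E * of_real s)) - cnj E * of_real s * (x * (- E * of_real s) + y * of_real c)"
    and "y = E * of_real s * (x * of_real c + y * (cnj E * of_real s)) + of_real c * (x * (- E * of_real s) + y * of_real c)"
proof -
  have cs': "(of_real c)^2 + (of_real s)^2 = (1::complex)" using arg_cong[OF cs, of complex_of_real] by simp
  have "of_real c * (x * of_real c + y * (cnj E * of_real s)) - cnj E * of_real s * (x * (- E * of_real s) + y * of_real c)
     = x * ((of_real c)^2 + (E * cnj E) * (of_real s)^2)" by (simp add: algebra_simps power2_eq_square)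
  also have "\<dots> = x" using cs' E by simp
  finally show "x = of_real c * (x * of_real c + y * (cnj E * of_real s)) - cnj E * of_real s * (x * (- E * of_real s) + y * of_real c)"
    by simp
  have "E * of_real s * (x * of_real c + y * (cnj E * of_real s)) + of_real c * (x * (- E * of_real s) + y * of_real c)
     = y * ((of_real c)^2 + (E * cnj E) * (of_real s)^2)" by (simp add: algebra_simps power2_eq_square)
  also have "\<dots> = y" using cs' E by simp
  finally show "y = E * of_real s * (x * of_real c + y * (cnj E * of_real s)) + of_real c * (x * (- E * of_real s) + y * of_real c)"
    by simp
qed

lemma alg_norm:
  fixes x y E :: complex and c s :: real
  assumes cs: "c^2 + s^2 = 1" and E: "E * cnj E = 1"
  shows "(cmod (x * of_real c + y * (cnj E * of_real s)))^2 + (cmod (x * (- E * of_real s) + y * of_real c))^2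
     = (cmod x)^2 + (cmod y)^2"
proof -
  have cs': "(of_real c)^2 + (of_real s)^2 = (1::complex)" using arg_cong[OF cs, of complex_of_real] by simp
  have "complex_of_real ((cmod (x * of_real c + y * (cnj E * of_real s)))^2 + (cmod (x * (- E * of_real s) + y * of_real c))^2)
     = (x * of_real c + y * (cnj E * of_real s)) * (cnj x * of_real c + cnj y * (E * of_real s))
       + (x * (- E * of_real s) + y * of_real c) * (cnj x * (- cnj E * of_real s) + cnj y * of_real c)"
    by (simp only: of_real_add complex_norm_square) simp
  also have "\<dots> = x * cnj x * ((of_real c)^2 + (E * cnj E) * (of_real s)^2) + y * cnj y * ((of_real c)^2 + (E * cnj E) * (of_real s)^2)"
    by (simp add: algebra_simps power2_eq_square)
  also have "\<dots> = (x * cnj x + y * cnj y) * ((of_real c)^2 + (of_real s)^2)"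
    using E by (simp add: algebra_simps)
  also have "\<dots> = complex_of_real ((cmod x)^2 + (cmod y)^2)"
    using cs' by (simp only: of_real_add complex_norm_square) simp
  finally show ?thesis using of_real_eq_iff by blast
qed

lemma nb1: fixes a b u v :: complex assumes "cmod a \<le> 1" "cmod b \<le> 1"
  shows "cmod (u * a + v * b) \<le> cmod u + cmod v"
proof -
  have "cmod (u * a + v * b) \<le> cmod u * cmod a + cmod v * cmod b"
    by (metis norm_mult norm_triangle_ineq)
  also have "\<dots> \<le> cmod u + cmod v" using assms
    by (intro add_mono mult_left_le) auto
  finally show ?thesis .
qed

lemma nb2: fixes u w v b :: complex and c :: real
  assumes "u * of_real c = w + v * b" "cmod b \<le> 1" "c \<ge> 1/2"
  shows "cmod u \<le> 2 * (cmod w + cmod v)"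
proof -
  have "cmod u * c = cmod (u * of_real c)" using assms(3) by (simp add: norm_mult)
  also have "\<dots> \<le> cmod w + cmod v * cmod b" using assms(1) by (metis norm_mult norm_triangle_ineq)
  also have "\<dots> \<le> cmod w + cmod v" using assms(2) by (intro add_mono mult_left_le) auto
  finally have "cmod u * c \<le> cmod w + cmod v" .
  moreover have "cmod u * (1/2) \<le> cmod u * c" using assms(3) by (intro mult_left_mono) auto
  ultimately show ?thesis by argo
qed

lemma alg_bounds:
  fixes x y E :: complex and c s :: real
  assumes cs: "c^2 + s^2 = 1" and E: "E * cnj E = 1" and c: "c \<ge> 1/2"
  defines "Yi \<equiv> x * of_real c + y * (cnj E * of_real s)"
  defines "Yj \<equiv> x * (- E * of_real s) + y * of_real c"
  shows "cmod Yi \<le> cmod x + cmod y" "cmod Yj \<le> cmod x + cmod y"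
    "cmod x \<le> 2 * (cmod Yi + cmod y)" "cmod y \<le> 2 * (cmod Yj + cmod x)"
    "cmod x \<le> cmod Yi + cmod Yj" "cmod y \<le> cmod Yi + cmod Yj"
    "cmod Yi \<le> 2 * (cmod x + cmod Yj)" "cmod Yj \<le> 2 * (cmod y + cmod Yi)"
proof -
  have "complex_of_real ((cmod E)^2) = 1" using E by (simp only: complex_norm_square)
  then have "(cmod E)^2 = 1" using of_real_eq_1_iff by blast
  then have nE: "cmod E = 1" using norm_ge_zero[of E] by (smt (verit) power2_eq_1_iff)
  have "c^2 \<le> 1" "s^2 \<le> 1" using cs by (smt (verit) zero_le_power2)+
  then have nc: "\<bar>c\<bar> \<le> 1" and ns: "\<bar>s\<bar> \<le> 1" by (simp_all add: abs_square_le_1)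
  have n1: "cmod (of_real c) \<le> 1" "cmod (cnj E * of_real s) \<le> 1" "cmod (- E * of_real s) \<le> 1"
    "cmod (- (cnj E * of_real s)) \<le> 1" "cmod (E * of_real s) \<le> 1"
    using nc ns nE by (auto simp: norm_mult)
  show "cmod Yi \<le> cmod x + cmod y" unfolding Yi_def by (rule nb1) (use n1 in auto)
  show "cmod Yj \<le> cmod x + cmod y" unfolding Yj_def by (rule nb1) (use n1 in auto)
  show "cmod x \<le> 2 * (cmod Yi + cmod y)"
    by (rule nb2[where b = "- (cnj E * of_real s)"]) (use n1 c in \<open>simp_all add: Yi_def\<close>)
  show "cmod y \<le> 2 * (cmod Yj + cmod x)"
    by (rule nb2[where b = "E * of_real s"]) (use n1 c in \<open>simp_all add: Yj_def\<close>)
  have ix: "x = of_real c * Yi - cnj E * of_real s * Yj" and iy: "y = E * of_real s * Yi + of_real c * Yj"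
    using alg_inv[OF cs E, where x=x and y=y] by (simp_all add: Yi_def Yj_def)
  show "cmod x \<le> cmod Yi + cmod Yj"
    using nb1[of "of_real c" "- (cnj E * of_real s)" Yi Yj] n1 ix by (simp add: mult.commute)
  show "cmod y \<le> cmod Yi + cmod Yj"
    using nb1[of "E * of_real s" "of_real c" Yi Yj] n1 iy by (simp add: mult.commute)
  show "cmod Yi \<le> 2 * (cmod x + cmod Yj)"
    by (rule nb2[where b = "cnj E * of_real s"]) (use n1 c ix in \<open>simp_all add: mult.commute\<close>)
  show "cmod Yj \<le> 2 * (cmod y + cmod Yi)"
    by (rule nb2[where b = "- E * of_real s"]) (use n1 c iy in \<open>simp_all add: mult.commute\<close>)
qed

definition stepr :: "nat \<Rightarrow> (nat \<Rightarrow> nat \<Rightarrow> complex) \<Rightarrow> (nat \<Rightarrow> nat \<Rightarrow> complex) \<Rightarrow> nat \<Rightarrow> nat \<Rightarrow> bool" where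
  "stepr n X Y a b \<longleftrightarrow>
    (\<forall>r t. r < n \<longrightarrow> t < n \<longrightarrow> r \<noteq> a \<longrightarrow> r \<noteq> b \<longrightarrow> t \<noteq> a \<longrightarrow> t \<noteq> b \<longrightarrow> Y r t = X r t) \<and>
    (\<forall>r. r < n \<longrightarrow> r \<noteq> a \<longrightarrow> r \<noteq> b \<longrightarrow>
       cmod (Y r a) \<le> cmod (X r a) + cmod (X r b) \<and> cmod (Y r b) \<le> cmod (X r a) + cmod (X r b) \<and>
       cmod (X r a) \<le> 2 * (cmod (Y r a) + cmod (X r b)) \<and> cmod (X r b) \<le> 2 * (cmod (Y r b) + cmod (X r a)))"

lemma stepr_sym: "stepr n X Y a b = stepr n X Y b a"
  unfolding stepr_def by (auto simp: add.commute)

lemma cos_quarter: assumes "\<bar>\<phi>\<bar> \<le> pi/4" shows "cos \<phi> \<ge> 1/2"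
proof -
  have "cos (pi/4) \<le> cos \<bar>\<phi>\<bar>"
    using assms by (subst cos_mono_le_eq) (use pi_gt_zero in linarith)+
  moreover have "cos \<bar>\<phi>\<bar> = cos \<phi>" by (cases "\<phi> \<ge> 0") auto
  moreover have "cos (pi/4) \<ge> 1/2"
  proof -
    have "sqrt 2 \<ge> (1::real)" by simp
    then show ?thesis by (simp add: cos_45)
  qed
  ultimately show ?thesis by linarith
qed

lemma expE: "exp (- (\<i> * complex_of_real \<alpha>)) = cnj (exp (\<i> * complex_of_real \<alpha>))"
proof -
  have "exp (\<i> * complex_of_real \<alpha>) = cis \<alpha>" by (simp add: cis_conv_exp)
  moreover have "exp (- (\<i> * complex_of_real \<alpha>)) = cis (- \<alpha>)" by (simp add: cis_conv_exp)
  ultimately show ?thesis by (simp add: cis_cnj)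
qed

lemma expE1: "exp (\<i> * complex_of_real \<alpha>) * cnj (exp (\<i> * complex_of_real \<alpha>)) = 1"
proof -
  have "exp (\<i> * complex_of_real \<alpha>) = cis \<alpha>" by (simp add: cis_conv_exp)
  then show ?thesis by (simp add: cis_cnj cis_mult)
qed

lemma rot_step:
  fixes X :: "complex mat"
  assumes X: "hermitian_mat n X" and ij: "i < j" "j < n" and phi: "\<bar>\<phi>\<bar> \<le> pi/4"
    and Y: "Y = ctrans (rot n i j \<phi> \<alpha>) * X * rot n i j \<phi> \<alpha>"
  shows "stepr n (\<lambda>r t. X $$ (r,t)) (\<lambda>r t. Y $$ (r,t)) i j \<and> stepr n (\<lambda>r t. Y $$ (r,t)) (\<lambda>r t. X $$ (r,t)) i j"
proof -
  have Xc: "X \<in> carrier_mat n n" using X by (simp add: hermitian_mat_def)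
  let ?E = "exp (\<i> * complex_of_real \<alpha>)"
  have cs: "(cos \<phi>)^2 + (sin \<phi>)^2 = 1" by simp
  note ab = alg_bounds[OF cs expE1 cos_quarter[OF phi]]
  have un: "Y $$ (r,t) = X $$ (r,t)" if "r < n" "t < n" "r \<noteq> i" "r \<noteq> j" "t \<noteq> i" "t \<noteq> j" for r t
    using rot_row_other[OF Xc, of r i j t \<phi> \<alpha>] that Y by simp
  have yi: "Y $$ (r,i) = X $$ (r,i) * complex_of_real (cos \<phi>) + X $$ (r,j) * (cnj ?E * complex_of_real (sin \<phi>))"
    if "r < n" "r \<noteq> i" "r \<noteq> j" for r
    using rot_row_i[OF Xc that ij, of \<phi> \<alpha>] Y by (simp add: expE)
  have yj: "Y $$ (r,j) = X $$ (r,i) * (- ?E * complex_of_real (sin \<phi>)) + X $$ (r,j) * complex_of_real (cos \<phi>)"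
    if "r < n" "r \<noteq> i" "r \<noteq> j" for r
    using rot_row_j[OF Xc that ij, of \<phi> \<alpha>] Y by simp
  show ?thesis
    unfolding stepr_def
  proof (intro conjI allI impI)
    fix r t assume "r < n" "t < n" "r \<noteq> i" "r \<noteq> j" "t \<noteq> i" "t \<noteq> j"
    then show "Y $$ (r,t) = X $$ (r,t)" "X $$ (r,t) = Y $$ (r,t)" using un by auto
  next
    fix r assume r: "r < n" "r \<noteq> i" "r \<noteq> j"
    note a = ab[where x="X $$ (r,i)" and y = "X $$ (r,j)"]
    show "cmod (Y $$ (r,i)) \<le> cmod (X $$ (r,i)) + cmod (X $$ (r,j))" unfolding yi[OF r] yj[OF r] by (rule a)
    show "cmod (Y $$ (r,j)) \<le> cmod (X $$ (r,i)) + cmod (X $$ (r,j))" unfolding yi[OF r] yj[OF r] by (rule a)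
    show "cmod (X $$ (r,i)) \<le> 2 * (cmod (Y $$ (r,i)) + cmod (X $$ (r,j)))" unfolding yi[OF r] yj[OF r] by (rule a)
    show "cmod (X $$ (r,j)) \<le> 2 * (cmod (Y $$ (r,j)) + cmod (X $$ (r,i)))" unfolding yi[OF r] yj[OF r] by (rule a)
    show "cmod (X $$ (r,i)) \<le> cmod (Y $$ (r,i)) + cmod (Y $$ (r,j))" unfolding yi[OF r] yj[OF r] by (rule a)
    show "cmod (X $$ (r,j)) \<le> cmod (Y $$ (r,i)) + cmod (Y $$ (r,j))" unfolding yi[OF r] yj[OF r] by (rule a)
    show "cmod (Y $$ (r,i)) \<le> 2 * (cmod (X $$ (r,i)) + cmod (Y $$ (r,j)))" unfolding yi[OF r] yj[OF r] by (rule a)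
    show "cmod (Y $$ (r,j)) \<le> 2 * (cmod (X $$ (r,j)) + cmod (Y $$ (r,i)))" unfolding yi[OF r] yj[OF r] by (rule a)
  qed
qed

lemma rot_pair_norm:
  fixes X :: "complex mat"
  assumes Xc: "X \<in> carrier_mat n n" and ij: "i < j" "j < n" and r: "r < n" "r \<noteq> i" "r \<noteq> j"
    and Y: "Y = ctrans (rot n i j \<phi> \<alpha>) * X * rot n i j \<phi> \<alpha>"
  shows "(cmod (Y $$ (r,i)))^2 + (cmod (Y $$ (r,j)))^2 = (cmod (X $$ (r,i)))^2 + (cmod (X $$ (r,j)))^2"
proof -
  let ?E = "exp (\<i> * complex_of_real \<alpha>)"
  have cs: "(cos \<phi>)^2 + (sin \<phi>)^2 = 1" by simp
  have yi: "Y $$ (r,i) = X $$ (r,i) * complex_of_real (cos \<phi>) + X $$ (r,j) * (cnj ?E * complex_of_real (sin \<phi>))"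
    using rot_row_i[OF Xc r ij, of \<phi> \<alpha>] Y by (simp add: expE)
  have yj: "Y $$ (r,j) = X $$ (r,i) * (- ?E * complex_of_real (sin \<phi>)) + X $$ (r,j) * complex_of_real (cos \<phi>)"
    using rot_row_j[OF Xc r ij, of \<phi> \<alpha>] Y by simp
  show ?thesis unfolding yi yj by (rule alg_norm[OF cs expE1])
qed

lemma off2_sum: "M \<in> carrier_mat n n \<Longrightarrow> off2 M = (\<Sum>r<n. \<Sum>t<n. if r = t then 0 else (cmod (M $$ (r,t)))^2)"
  by (simp add: off2_def)

lemma rot_energy:
  fixes X :: "complex mat"
  assumes X: "hermitian_mat n X" and ij: "i < j" "j < n"
    and Y: "Y = ctrans (rot n i j \<phi> \<alpha>) * X * rot n i j \<phi> \<alpha>"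
  shows "off2 Y = off2 X - 2 * (cmod (X $$ (i,j)))^2 + 2 * (cmod (Y $$ (i,j)))^2"
proof -
  have Xc: "X \<in> carrier_mat n n" using X by (simp add: hermitian_mat_def)
  have YH: "hermitian_mat n Y" using prod_herm[OF X rot_dim(1)] Y by simp
  have Yc: "Y \<in> carrier_mat n n" using YH by (simp add: hermitian_mat_def)
  define g where "g M r t = (if r = t then 0 else (cmod (M $$ (r,t)))^2)" for M :: "complex mat" and r t
  define h where "h r t = g Y r t - g X r t" for r t
  have un: "Y $$ (r,t) = X $$ (r,t)" if "r < n" "t < n" "r \<noteq> i" "r \<noteq> j" "t \<noteq> i" "t \<noteq> j" for r t
    using rot_row_other[OF Xc, of r i j t \<phi> \<alpha>] that Y by simp
  have hs: "h t r = h r t" if "r < n" "t < n" for r t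
    unfolding h_def g_def using herm_cmod[OF X that] herm_cmod[OF YH that] by auto
  have row0: "(\<Sum>t<n. h r t) = 0" if r: "r < n" "r \<noteq> i" "r \<noteq> j" for r
  proof -
    have "(\<Sum>t<n. h r t) = h r i + h r j"
      by (rule sum2) (use ij r un in \<open>auto simp: h_def g_def\<close>)
    also have "\<dots> = 0" using rot_pair_norm[OF Xc ij r Y] r unfolding h_def g_def by auto
    finally show ?thesis .
  qed
  have "(\<Sum>r<n. \<Sum>t<n. h r t) = (\<Sum>t<n. h i t) + (\<Sum>t<n. h j t)"
    by (rule sum2) (use ij row0 in auto)
  also have "\<dots> = (\<Sum>t<n. h i t + h j t)" by (simp add: sum.distrib)
  also have "\<dots> = (h i i + h j i) + (h i j + h j j)"
  proof (rule sum2)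
    fix t assume t: "t < n" "t \<noteq> i" "t \<noteq> j"
    have "h i t + h j t = h t i + h t j" using hs[of i t] hs[of j t] t ij by simp
    also have "\<dots> = 0" using rot_pair_norm[OF Xc ij t Y] t unfolding h_def g_def by auto
    finally show "h i t + h j t = 0" .
  qed (use ij in auto)
  also have "\<dots> = 2 * h i j" using hs[of i j] ij by (simp add: h_def g_def)
  finally have tot: "(\<Sum>r<n. \<Sum>t<n. h r t) = 2 * h i j" .
  have "off2 Y - off2 X = (\<Sum>r<n. \<Sum>t<n. h r t)"
    unfolding off2_sum[OF Yc] off2_sum[OF Xc] h_def g_def by (simp add: sum_subtractf)
  then show ?thesis using tot ij unfolding h_def g_def by simp
qed

definition T :: "nat \<Rightarrow> nat" where "T s = s * (s - 1) div 2"

lemma T_Suc: "T (Suc s) = T s + s"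
proof (cases s)
  case 0 then show ?thesis by (simp add: T_def)
next
  case (Suc m)
  have "Suc s * s = s * (s - 1) + 2 * s" using Suc by simp
  then show ?thesis unfolding T_def by simp
qed

lemma T_mono: assumes "s \<le> n" shows "T s \<le> T n"
proof -
  have "s - 1 \<le> n - 1" using assms by simp
  then have "s * (s - 1) \<le> n * (n - 1)" using assms by (rule mult_le_mono[rotated])
  then show ?thesis unfolding T_def by (rule div_le_mono)
qed

lemma T_decomp: "k < T s \<Longrightarrow> \<exists>s' m. 1 \<le> s' \<and> s' < s \<and> m < s' \<and> k = T s' + m"
proof (induction s arbitrary: k)
  case 0 then show ?case by (simp add: T_def)
next
  case (Suc s)
  show ?case
  proof (cases "k < T s")
    case True
    then obtain s' m where "1 \<le> s'" "s' < s" "m < s'" "k = T s' + m" using Suc.IH by blast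
    then have "1 \<le> s' \<and> s' < Suc s \<and> m < s' \<and> k = T s' + m" by simp
    then show ?thesis by blast
  next
    case False
    then have "k - T s < s" "k = T s + (k - T s)" using Suc.prems by (auto simp: T_Suc)
    moreover have "1 \<le> s" using \<open>k - T s < s\<close> by simp
    ultimately show ?thesis by blast
  qed
qed

lemma stepr_un: "stepr n X Y a b \<Longrightarrow> r < n \<Longrightarrow> t < n \<Longrightarrow> r \<noteq> a \<Longrightarrow> r \<noteq> b \<Longrightarrow> t \<noteq> a \<Longrightarrow> t \<noteq> b \<Longrightarrow> Y r t = X r t"
  by (simp add: stepr_def)

lemma stepr_b: "stepr n X Y a b \<Longrightarrow> r < n \<Longrightarrow> r \<noteq> a \<Longrightarrow> r \<noteq> b \<Longrightarrow>
       cmod (Y r a) \<le> cmod (X r a) + cmod (X r b) \<and> cmod (Y r b) \<le> cmod (X r a) + cmod (X r b) \<and>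
       cmod (X r a) \<le> 2 * (cmod (Y r a) + cmod (X r b)) \<and> cmod (X r b) \<le> 2 * (cmod (Y r b) + cmod (X r a))"
  by (simp add: stepr_def)

fun Mb :: "nat \<Rightarrow> nat \<Rightarrow> real" where
  "Mb n 0 = 0"
| "Mb n (Suc s) = 2^n * (2^n * (1 + 2 * Mb n s) + 1)"

lemma Mb_nonneg: "Mb n s \<ge> 0"
  by (induction s) auto

definition cc :: "nat \<Rightarrow> nat \<Rightarrow> real" where
  "cc n t = 2^(T t) * 2^t * (1 + 2 * Mb n t)"

definition Ccore :: "nat \<Rightarrow> real" where
  "Ccore n = (\<Sum>t<n. cc n t)"

locale core_setup =
  fixes n :: nat and B :: "nat \<Rightarrow> nat \<Rightarrow> nat \<Rightarrow> complex" and \<tau> :: "nat \<Rightarrow> nat list"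
    and pr :: "nat \<Rightarrow> nat \<times> nat" and p :: real
  assumes tau: "\<And>s. 1 \<le> s \<Longrightarrow> s < n \<Longrightarrow> distinct (\<tau> s) \<and> set (\<tau> s) = {0..<s}"
    and pr: "\<And>s m. 1 \<le> s \<Longrightarrow> s < n \<Longrightarrow> m < s \<Longrightarrow> pr (T s + m) = (\<tau> s ! m, s)"
    and st: "\<And>k. k < T n \<Longrightarrow> stepr n (B k) (B (Suc k)) (fst (pr k)) (snd (pr k)) \<and>
                                stepr n (B (Suc k)) (B k) (fst (pr k)) (snd (pr k))"
    and piv: "\<And>k. k < T n \<Longrightarrow> cmod (B k (fst (pr k)) (snd (pr k))) \<le> p \<and>
                                 cmod (B (Suc k) (fst (pr k)) (snd (pr k))) \<le> p"
    and hs: "\<And>k r t. k \<le> T n \<Longrightarrow> r < n \<Longrightarrow> t < n \<Longrightarrow> cmod (B k t r) = cmod (B k r t)"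
    and p0: "p \<ge> 0"
begin

lemma tau_len: "1 \<le> s \<Longrightarrow> s < n \<Longrightarrow> length (\<tau> s) = s"
  using tau[of s] distinct_card[of "\<tau> s"] by auto

lemma tau_lt: "1 \<le> s \<Longrightarrow> s < n \<Longrightarrow> m < s \<Longrightarrow> \<tau> s ! m < s"
  using tau[of s] tau_len[of s] nth_mem[of m "\<tau> s"] by auto

lemma tau_inj: "1 \<le> s \<Longrightarrow> s < n \<Longrightarrow> m < s \<Longrightarrow> m' < s \<Longrightarrow> m \<noteq> m' \<Longrightarrow> \<tau> s ! m \<noteq> \<tau> s ! m'"
  using tau[of s] tau_len[of s] nth_eq_iff_index_eq by metis

lemma tau_surj: "1 \<le> s \<Longrightarrow> s < n \<Longrightarrow> r < s \<Longrightarrow> \<exists>m<s. \<tau> s ! m = r"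
  using tau[of s] tau_len[of s] by (metis atLeastLessThan_iff in_set_conv_nth zero_le)

lemma pair_before:
  assumes "k < T s" "s \<le> n"
  shows "fst (pr k) < snd (pr k) \<and> snd (pr k) < s"
proof -
  obtain s' m where sm: "1 \<le> s'" "s' < s" "m < s'" "k = T s' + m" using T_decomp[OF assms(1)] by blast
  then have "pr k = (\<tau> s' ! m, s')" using pr assms by simp
  then show ?thesis using tau_lt[of s' m] sm assms by simp
qed

lemma colA:
  assumes s: "s < n"
  shows "k \<le> T s \<Longrightarrow> (\<forall>r<s. cmod (B k r s) \<le> X) \<Longrightarrow> (\<forall>r<s. cmod (B 0 r s) \<le> 2^k * X)"
proof (induction k arbitrary: X)
  case 0 then show ?case by simp
next
  case (Suc k)
  have kT: "k < T s" using Suc.prems by simp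
  have kn: "k < T n" using kT T_mono[of s n] s by simp
  obtain a b where ab: "pr k = (a,b)" by fastforce
  have abs: "a < b" "b < s" using pair_before[OF kT] s ab by auto
  have s1: "stepr n (B k) (B (Suc k)) a b" and s2: "stepr n (B (Suc k)) (B k) a b" using st[OF kn] ab by auto
  have b2: "\<forall>r<s. cmod (B k r s) \<le> 2 * X"
  proof (intro allI impI)
    fix r assume r: "r < s"
    show "cmod (B k r s) \<le> 2 * X"
    proof (cases "r = a \<or> r = b")
      case False
      then have "B k r s = B (Suc k) r s" using stepr_un[OF s1, of r s] r abs s by auto
      moreover have "X \<ge> 0" using Suc.prems(2) r by (meson norm_ge_zero order_trans)
      ultimately show ?thesis using Suc.prems(2) r by fastforce
    next
      case True
      have hb: "cmod (B k s a) \<le> cmod (B (Suc k) s a) + cmod (B (Suc k) s b)"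
           "cmod (B k s b) \<le> cmod (B (Suc k) s a) + cmod (B (Suc k) s b)"
        using stepr_b[OF s2, of s] abs s by auto
      have "cmod (B (Suc k) s a) = cmod (B (Suc k) a s)" "cmod (B (Suc k) s b) = cmod (B (Suc k) b s)"
        using hs[of "Suc k" a s] hs[of "Suc k" b s] Suc.prems(1) T_mono[of s n] s abs by auto
      moreover have "cmod (B k s a) = cmod (B k a s)" "cmod (B k s b) = cmod (B k b s)"
        using hs[of k a s] hs[of k b s] kT T_mono[of s n] s abs by auto
      moreover have "cmod (B (Suc k) a s) \<le> X" "cmod (B (Suc k) b s) \<le> X" using Suc.prems(2) abs by auto
      ultimately show ?thesis using hb True by auto
    qed
  qed
  have "\<forall>r<s. cmod (B 0 r s) \<le> 2^k * (2 * X)" using Suc.IH[OF _ b2] kT by simp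
  then show ?case by (simp add: mult.assoc mult.left_commute)
qed

end

context core_setup begin

lemma colB:
  assumes s: "1 \<le> s" "s < n" and G0: "G \<ge> 0"
    and G: "\<And>r t. r < s \<Longrightarrow> t < s \<Longrightarrow> r \<noteq> t \<Longrightarrow> cmod (B (T s) r t) \<le> G"
    and r: "r < s"
  shows "cmod (B (T s) r s) \<le> 2^s * (p + 2 * G)"
proof -
  obtain m where m: "m < s" "\<tau> s ! m = r" using tau_surj[OF s r] by blast
  have TSn: "T (Suc s) \<le> T n" using T_mono[of "Suc s" n] s by simp
  have stk: "stepr n (B (T s + k)) (B (Suc (T s + k))) (\<tau> s ! k) s" if "k < s" for k
    using st[of "T s + k"] pr[OF s that] that TSn by (auto simp: T_Suc)
  have unch: "B (T s + l) r (\<tau> s ! k) = B (T s) r (\<tau> s ! k)" if "k < m" "l \<le> k" for k l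
    using that(2)
  proof (induction l)
    case 0 then show ?case by simp
  next
    case (Suc l)
    have "l < s" "k < s" using Suc.prems that m by auto
    have ne: "r \<noteq> \<tau> s ! l" "\<tau> s ! k \<noteq> \<tau> s ! l" using tau_inj[OF s] m Suc.prems that \<open>k < s\<close> \<open>l < s\<close>
      by (metis Suc_le_eq less_irrefl order.strict_trans)+
    have "B (Suc (T s + l)) r (\<tau> s ! k) = B (T s + l) r (\<tau> s ! k)"
      by (rule stepr_un[OF stk[OF \<open>l < s\<close>]]) (use ne r s tau_lt[OF s \<open>k < s\<close>] in auto)
    then show ?case using Suc by simp
  qed
  have rec: "cmod (B (T s + k) r s) + 2 * G \<le> 2^(m - k) * (p + 2 * G)" if "k \<le> m" for k
    using that
  proof (induction "m - k" arbitrary: k)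
    case 0
    then have "k = m" by simp
    have "T s + m < T n" using TSn m by (simp add: T_Suc)
    then have "cmod (B (T s + m) r s) \<le> p" using piv[of "T s + m"] pr[OF s m(1)] m by simp
    then show ?case using \<open>k = m\<close> by simp
  next
    case (Suc d)
    have km: "k < m" "Suc k \<le> m" "m - Suc k = d" using Suc by auto
    have ks: "k < s" using km m by simp
    have ne: "r \<noteq> \<tau> s ! k" using tau_inj[OF s ks m(1)] km m by auto
    have "cmod (B (T s + k) r s) \<le> 2 * (cmod (B (Suc (T s + k)) r s) + cmod (B (T s + k) r (\<tau> s ! k)))"
      using stepr_b[OF stk[OF ks], of r] ne r s by auto
    moreover have "cmod (B (T s + k) r (\<tau> s ! k)) \<le> G"
      using unch[OF km(1), of k] G[of r "\<tau> s ! k"] ne r tau_lt[OF s ks] by simp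
    moreover have "cmod (B (T s + Suc k) r s) + 2 * G \<le> 2^d * (p + 2 * G)"
      using Suc.hyps(1)[of "Suc k"] km by simp
    moreover have "m - k = Suc d" using Suc by simp
    ultimately show ?case by simp
  qed
  have "cmod (B (T s) r s) + 2 * G \<le> 2^m * (p + 2 * G)" using rec[of 0] by simp
  also have "\<dots> \<le> 2^s * (p + 2 * G)"
    using m G0 p0 by (intro mult_right_mono power_increasing) auto
  finally show ?thesis using G0 by simp
qed

lemma colC:
  assumes s: "1 \<le> s" "s < n" and H0: "H \<ge> 0"
    and H: "\<And>r t. r \<le> s \<Longrightarrow> t \<le> s \<Longrightarrow> r \<noteq> t \<Longrightarrow> cmod (B (T s) r t) \<le> H"
  shows "j \<le> s \<Longrightarrow> r \<le> s \<Longrightarrow> t \<le> s \<Longrightarrow> r \<noteq> t \<Longrightarrow> cmod (B (T s + j) r t) + p \<le> 2^j * (H + p)"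
proof (induction j arbitrary: r t)
  case 0 then show ?case using H by simp
next
  case (Suc j)
  have js: "j < s" using Suc.prems by simp
  have TSn: "T (Suc s) \<le> T n" using T_mono[of "Suc s" n] s by simp
  have kn: "T s + j < T n" using TSn js by (simp add: T_Suc)
  define a where "a = \<tau> s ! j"
  have a: "a < s" using tau_lt[OF s js] a_def by simp
  have prk: "pr (T s + j) = (a, s)" using pr[OF s js] a_def by simp
  have s1: "stepr n (B (T s + j)) (B (Suc (T s + j))) a s" using st[OF kn] prk by simp
  have pv: "cmod (B (Suc (T s + j)) a s) \<le> p" using piv[OF kn] prk by simp
  have IH: "cmod (B (T s + j) r' t') + p \<le> 2^j * (H + p)" if "r' \<le> s" "t' \<le> s" "r' \<noteq> t'" for r' t'
    using Suc.IH[of r' t'] that js by simp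
  have pos: "0 \<le> 2^j * (H + p)" using H0 p0 by simp
  have aux: "cmod (B (Suc (T s + j)) r' t') + p \<le> 2^Suc j * (H + p)"
    if "r' \<le> s" "r' \<noteq> a" "r' \<noteq> s" "t' = a \<or> t' = s" for r' t'
  proof -
    have "cmod (B (Suc (T s + j)) r' t') \<le> cmod (B (T s + j) r' a) + cmod (B (T s + j) r' s)"
      using stepr_b[OF s1, of r'] that s by auto
    moreover have "cmod (B (T s + j) r' a) + p \<le> 2^j * (H + p)" using IH[of r' a] that a by simp
    moreover have "cmod (B (T s + j) r' s) + p \<le> 2^j * (H + p)" using IH[of r' s] that by simp
    ultimately show ?thesis using p0 by simp
  qed
  have hsk: "cmod (B (Suc (T s + j)) t r) = cmod (B (Suc (T s + j)) r t)"
    using hs[of "Suc (T s + j)" r t] kn Suc.prems s by simp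
  show ?case
  proof (cases "r \<in> {a,s} \<or> t \<in> {a,s}")
    case False
    then have "B (Suc (T s + j)) r t = B (T s + j) r t"
      using stepr_un[OF s1, of r t] Suc.prems s by auto
    then have "cmod (B (Suc (T s + j)) r t) + p \<le> 2^j * (H + p)" using IH[of r t] Suc.prems by simp
    moreover have "2^j * (H + p) \<le> 2^Suc j * (H + p)" using pos H0 p0 by simp
    ultimately show ?thesis unfolding add_Suc_right by linarith
  next
    case True
    show ?thesis
    proof (cases "r \<in> {a,s} \<and> t \<in> {a,s}")
      case True
      then have "(r = a \<and> t = s) \<or> (r = s \<and> t = a)" using Suc.prems by auto
      then have "cmod (B (Suc (T s + j)) r t) \<le> p" using pv hsk by auto
      moreover have "2 * p \<le> 2^Suc j * (H + p)"
      proof -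
        have "2 * p \<le> 2 * (H + p)" using H0 by simp
        also have "\<dots> \<le> 2^Suc j * (H + p)" using H0 p0 by (intro mult_right_mono) (auto simp: power_increasing)
        finally show ?thesis .
      qed
      ultimately show ?thesis by simp
    next
      case False
      then show ?thesis
      proof (cases "t \<in> {a,s}")
        case True
        then show ?thesis using aux[of r t] False Suc.prems by auto
      next
        case False
        then have "r \<in> {a,s}" using \<open>r \<in> {a,s} \<or> t \<in> {a,s}\<close> by simp
        then show ?thesis using aux[of t r] False Suc.prems hsk by auto
      qed
    qed
  qed
qed

lemma lead: "s \<le> n \<Longrightarrow> r < s \<Longrightarrow> t < s \<Longrightarrow> r \<noteq> t \<Longrightarrow> cmod (B (T s) r t) \<le> Mb n s * p"
proof (induction s arbitrary: r t)
  case 0 then show ?case by simp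
next
  case (Suc s)
  show ?case
  proof (cases "s = 0")
    case True then show ?thesis using Suc.prems by simp
  next
    case False
    then have s: "1 \<le> s" "s < n" using Suc.prems by auto
    define M where "M = Mb n s"
    have M0: "M \<ge> 0" using Mb_nonneg M_def by simp
    define G where "G = M * p"
    have G0: "G \<ge> 0" using M0 p0 G_def by simp
    have IH: "cmod (B (T s) r' t') \<le> G" if "r' < s" "t' < s" "r' \<noteq> t'" for r' t'
      using Suc.IH[of r' t'] that s G_def M_def by simp
    define H where "H = 2^n * (1 + 2 * M) * p"
    have col: "cmod (B (T s) r' s) \<le> H" if "r' < s" for r'
    proof -
      have "cmod (B (T s) r' s) \<le> 2^s * (p + 2 * G)" by (rule colB[OF s G0 IH that])
      also have "\<dots> \<le> 2^n * (p + 2 * G)" using G0 p0 s by (intro mult_right_mono power_increasing) auto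
      also have "\<dots> = H" unfolding H_def G_def by (simp add: algebra_simps)
      finally show ?thesis .
    qed
    have GH: "G \<le> H"
    proof -
      have "M \<le> 2^n * (1 + 2 * M)"
      proof -
        have "(1::real) \<le> 2^n" by simp
        then have "1 + 2 * M \<le> 2^n * (1 + 2 * M)" using M0 by (simp add: mult_le_cancel_right1)
        then show ?thesis using M0 by linarith
      qed
      then show ?thesis unfolding G_def H_def using p0 by (intro mult_right_mono) auto
    qed
    have H0: "H \<ge> 0" using G0 GH by simp
    have Hb: "cmod (B (T s) r' t') \<le> H" if "r' \<le> s" "t' \<le> s" "r' \<noteq> t'" for r' t'
    proof (cases "r' < s \<and> t' < s")
      case True then show ?thesis using IH[of r' t'] GH that by simp
    next
      case False
      then have "(r' = s \<and> t' < s) \<or> (t' = s \<and> r' < s)" using that by auto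
      moreover have "cmod (B (T s) s t') = cmod (B (T s) t' s)" if "t' < s"
        using hs[of "T s" t' s] T_mono[of s n] s that by simp
      ultimately show ?thesis using col by auto
    qed
    have "cmod (B (T s + s) r t) + p \<le> 2^s * (H + p)"
      by (rule colC[OF s H0 Hb]) (use Suc.prems in auto)
    also have "\<dots> \<le> 2^n * (H + p)" using H0 p0 s by (intro mult_right_mono power_increasing) auto
    also have "\<dots> = Mb n (Suc s) * p" unfolding H_def M_def by (simp add: algebra_simps)
    finally show ?thesis using p0 by (simp add: T_Suc)
  qed
qed

lemma final: assumes "r < n" "t < n" "r \<noteq> t" shows "cmod (B 0 r t) \<le> Ccore n * p"
proof -
  have gen: "cmod (B 0 r' t') \<le> cc n t' * p" if rt: "r' < t'" "t' < n" for r' t'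
  proof -
    have s: "1 \<le> t'" "t' < n" using rt by auto
    define G where "G = Mb n t' * p"
    have G0: "G \<ge> 0" using Mb_nonneg p0 G_def by simp
    have "\<forall>r<t'. cmod (B (T t') r t') \<le> 2^t' * (p + 2 * G)"
      using colB[OF s G0] lead[of t'] s G_def by simp
    then have "\<forall>r<t'. cmod (B 0 r t') \<le> 2^(T t') * (2^t' * (p + 2 * G))"
      using colA[OF s(2), of "T t'"] by blast
    then have "cmod (B 0 r' t') \<le> 2^(T t') * (2^t' * (p + 2 * G))" using rt by blast
    also have "\<dots> = cc n t' * p" unfolding cc_def G_def by (simp add: algebra_simps)
    finally show ?thesis .
  qed
  have ccle: "cc n t' \<le> Ccore n" if "t' < n" for t'
    unfolding Ccore_def
    by (rule member_le_sum) (use that Mb_nonneg in \<open>auto simp: cc_def intro!: mult_nonneg_nonneg add_nonneg_nonneg\<close>)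
  have ccp: "cc n t' * p \<le> Ccore n * p" if "t' < n" for t'
    using ccle[OF that] p0 by (rule mult_right_mono)
  show ?thesis
  proof (cases "r < t")
    case True then show ?thesis using gen[of r t] ccp[of t] assms by simp
  next
    case False
    then have "t < r" using assms by simp
    then have "cmod (B 0 t r) \<le> Ccore n * p" using gen[of t r] ccp[of r] assms by simp
    moreover have "cmod (B 0 t r) = cmod (B 0 r t)" using hs[of 0 r t] assms by simp
    ultimately show ?thesis by simp
  qed
qed

end

lemma stepr_refl:
  assumes st: "stepr n X Y a b" and ab: "a < n" "b < n"
  shows "stepr n (\<lambda>r t. X (n-1-r) (n-1-t)) (\<lambda>r t. Y (n-1-r) (n-1-t)) (n-1-a) (n-1-b)"
  unfolding stepr_def
proof (intro conjI allI impI)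
  fix r t assume h: "r < n" "t < n" "r \<noteq> n - 1 - a" "r \<noteq> n - 1 - b" "t \<noteq> n - 1 - a" "t \<noteq> n - 1 - b"
  show "Y (n - 1 - r) (n - 1 - t) = X (n - 1 - r) (n - 1 - t)"
    by (rule stepr_un[OF st]) (use h ab in auto)
next
  fix r assume h: "r < n" "r \<noteq> n - 1 - a" "r \<noteq> n - 1 - b"
  have e: "n - 1 - (n - 1 - a) = a" "n - 1 - (n - 1 - b) = b" using ab by auto
  have "n - 1 - r < n" "n - 1 - r \<noteq> a" "n - 1 - r \<noteq> b" using h ab by auto
  note q = stepr_b[OF st this]
  show "cmod (Y (n - 1 - r) (n - 1 - (n - 1 - a))) \<le> cmod (X (n - 1 - r) (n - 1 - (n - 1 - a))) + cmod (X (n - 1 - r) (n - 1 - (n - 1 - b)))"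
    "cmod (Y (n - 1 - r) (n - 1 - (n - 1 - b))) \<le> cmod (X (n - 1 - r) (n - 1 - (n - 1 - a))) + cmod (X (n - 1 - r) (n - 1 - (n - 1 - b)))"
    "cmod (X (n - 1 - r) (n - 1 - (n - 1 - a))) \<le> 2 * (cmod (Y (n - 1 - r) (n - 1 - (n - 1 - a))) + cmod (X (n - 1 - r) (n - 1 - (n - 1 - b))))"
    "cmod (X (n - 1 - r) (n - 1 - (n - 1 - b))) \<le> 2 * (cmod (Y (n - 1 - r) (n - 1 - (n - 1 - b))) + cmod (X (n - 1 - r) (n - 1 - (n - 1 - a))))"
    unfolding e using q by auto
qed

lemma concat_len_nth:
  assumes F: "\<And>s. 1 \<le> s \<Longrightarrow> s < K \<Longrightarrow> length (F s) = s"
  shows "n \<le> K \<Longrightarrow> length (concat (map F [1..<n])) = T n \<and>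
     (\<forall>s m. 1 \<le> s \<longrightarrow> s < n \<longrightarrow> m < s \<longrightarrow> concat (map F [1..<n]) ! (T s + m) = F s ! m)"
proof (induction n)
  case 0 then show ?case by (simp add: T_def)
next
  case (Suc n)
  show ?case
  proof (cases "n = 0")
    case True then show ?thesis by (simp add: T_def)
  next
    case False
    have ups: "[1..<Suc n] = [1..<n] @ [n]" using False by simp
    have IH: "length (concat (map F [1..<n])) = T n"
      "\<And>s m. 1 \<le> s \<Longrightarrow> s < n \<Longrightarrow> m < s \<Longrightarrow> concat (map F [1..<n]) ! (T s + m) = F s ! m"
      using Suc by auto
    have Fn: "length (F n) = n" using F[of n] Suc.prems False by simp
    have len: "length (concat (map F [1..<Suc n])) = T (Suc n)" unfolding ups using IH(1) Fn by (simp add: T_Suc)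
    have "concat (map F [1..<Suc n]) ! (T s + m) = F s ! m" if sm: "1 \<le> s" "s < Suc n" "m < s" for s m
    proof (cases "s < n")
      case True
      have "T s + m < T (Suc s)" using sm by (simp add: T_Suc)
      also have "\<dots> \<le> T n" using True by (intro T_mono) simp
      finally have lt: "T s + m < length (concat (map F [1..<n]))" using IH(1) by simp
      show ?thesis unfolding ups using IH(2)[OF sm(1) True sm(3)] lt by (simp add: nth_append)
    next
      case False
      then have "s = n" using sm by simp
      then show ?thesis unfolding ups using IH(1) by (simp add: nth_append)
    qed
    then show ?thesis using len by blast
  qed
qed

lemma Cc_struct:
  assumes "ord \<in> C_c n"
  obtains \<tau> where "\<And>s. distinct (\<tau> s) \<and> set (\<tau> s) = {0..<s}" "length ord = T n"
    "\<And>s m. 1 \<le> s \<Longrightarrow> s < n \<Longrightarrow> m < s \<Longrightarrow> ord ! (T s + m) = (\<tau> s ! m, s)"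
proof -
  obtain \<tau> where t: "\<forall>j. distinct (\<tau> j) \<and> set (\<tau> j) = {0..<j}"
    and o: "ord = concat (map (\<lambda>j. map (\<lambda>i. (i, j)) (\<tau> j)) [1..<n])"
    using assms unfolding C_c_def by blast
  have len: "length (map (\<lambda>i. (i, s)) (\<tau> s)) = s" for s using t distinct_card[of "\<tau> s"] by auto
  note c = concat_len_nth[of n "\<lambda>j. map (\<lambda>i. (i, j)) (\<tau> j)", OF len order_refl]
  show ?thesis
  proof (rule that)
    show "distinct (\<tau> s) \<and> set (\<tau> s) = {0..<s}" for s using t by blast
    show "length ord = T n" using c o by simp
    show "ord ! (T s + m) = (\<tau> s ! m, s)" if "1 \<le> s" "s < n" "m < s" for s m
      using c o that len[of s] by simp
  qed
qed

lemma rev_upt_refl: "rev [0..<n-1] = map (\<lambda>s. n-1-s) [1..<n]"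
  by (rule nth_equalityI) (auto simp: rev_nth)

lemma Cr_struct:
  assumes "ord \<in> C_r n"
  obtains \<tau>' where "\<And>s. 1 \<le> s \<Longrightarrow> s < n \<Longrightarrow> distinct (\<tau>' s) \<and> set (\<tau>' s) = {0..<s}" "length ord = T n"
    "\<And>s m. 1 \<le> s \<Longrightarrow> s < n \<Longrightarrow> m < s \<Longrightarrow> ord ! (T s + m) = (n-1-s, n-1-(\<tau>' s ! m))"
proof -
  obtain \<tau> where t: "\<forall>i. distinct (\<tau> i) \<and> set (\<tau> i) = {i<..<n}"
    and o: "ord = concat (map (\<lambda>i. map (\<lambda>j. (i, j)) (\<tau> i)) (rev [0..<n - 1]))"
    using assms unfolding C_r_def by blast
  define F where "F s = map (\<lambda>j. (n-1-s, j)) (\<tau> (n-1-s))" for s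
  have o2: "ord = concat (map F [1..<n])" unfolding o rev_upt_refl F_def by (simp add: comp_def)
  have len: "length (F s) = s" if "1 \<le> s" "s < n" for s
    using t distinct_card[of "\<tau> (n-1-s)"] that by (auto simp: F_def)
  note c = concat_len_nth[of n F, OF len order_refl]
  define \<tau>' where "\<tau>' s = map (\<lambda>j. n-1-j) (\<tau> (n-1-s))" for s
  show ?thesis
  proof (rule that)
    fix s assume s: "1 \<le> s" "s < n"
    have "inj_on (\<lambda>j. n-1-j) (set (\<tau> (n-1-s)))" using t by (auto simp: inj_on_def)
    then have "distinct (\<tau>' s)" using t by (simp add: \<tau>'_def distinct_map)
    moreover have "set (\<tau>' s) = {0..<s}"
    proof
      show "set (\<tau>' s) \<subseteq> {0..<s}" using t s by (auto simp: \<tau>'_def)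
      show "{0..<s} \<subseteq> set (\<tau>' s)"
      proof
        fix x assume x: "x \<in> {0..<s}"
        then have "n-1-x \<in> set (\<tau> (n-1-s))" using t s by auto
        moreover have "x = n-1-(n-1-x)" using x s by auto
        ultimately show "x \<in> set (\<tau>' s)" unfolding \<tau>'_def by auto
      qed
    qed
    ultimately show "distinct (\<tau>' s) \<and> set (\<tau>' s) = {0..<s}" by blast
  next
    show "length ord = T n" using c o2 by simp
  next
    fix s m assume sm: "1 \<le> s" "s < n" "m < s"
    have ml: "m < length (\<tau> (n-1-s))" using len[OF sm(1,2)] sm by (simp add: F_def)
    then have "\<tau> (n-1-s) ! m \<in> {n-1-s<..<n}" using t nth_mem by blast
    then have e: "n-1-(\<tau>' s ! m) = \<tau> (n-1-s) ! m" using ml by (auto simp: \<tau>'_def)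
    show "ord ! (T s + m) = (n-1-s, n-1-(\<tau>' s ! m))"
      using c o2 sm ml unfolding e by (simp add: F_def)
  qed
qed

lemma sweep_facts:
  assumes H: "hermitian_mat n A" and J: "jacobi_sweep n ord A A'"
    and V: "\<And>k. k < T n \<Longrightarrow> fst (ord!k) < snd (ord!k) \<and> snd (ord!k) < n"
  obtains As where "As 0 = A" "As (T n) = A'" "\<And>k. k \<le> T n \<Longrightarrow> hermitian_mat n (As k)"
    "\<And>k. k < T n \<Longrightarrow> stepr n (\<lambda>r t. As k $$ (r,t)) (\<lambda>r t. As (Suc k) $$ (r,t)) (fst (ord!k)) (snd (ord!k)) \<and>
                      stepr n (\<lambda>r t. As (Suc k) $$ (r,t)) (\<lambda>r t. As k $$ (r,t)) (fst (ord!k)) (snd (ord!k))"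
    "\<And>k. k < T n \<Longrightarrow> As (Suc k) $$ (fst (ord!k), snd (ord!k)) = 0"
    "off2 (As (T n)) = off2 (As 0) - 2 * (\<Sum>k<T n. (cmod (As k $$ (fst (ord!k), snd (ord!k))))^2)"
proof -
  obtain As :: "nat \<Rightarrow> complex mat" and \<phi> \<alpha> :: "nat \<Rightarrow> real" where
    a0: "As 0 = A" and aN: "As (T n) = A'" and
    ak: "\<And>k. k < T n \<Longrightarrow> (let (i, j) = ord ! k; U = rot n i j (\<phi> k) (\<alpha> k) in
              As (Suc k) = ctrans U * As k * U \<and>
              As (Suc k) $$ (i, j) = 0 \<and>
              - (pi / 4) \<le> \<phi> k \<and> \<phi> k \<le> pi / 4)"
    using J unfolding jacobi_sweep_def T_def by blast
  have ak': "As (Suc k) = ctrans (rot n (fst (ord!k)) (snd (ord!k)) (\<phi> k) (\<alpha> k)) * As k * rot n (fst (ord!k)) (snd (ord!k)) (\<phi> k) (\<alpha> k)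
     \<and> As (Suc k) $$ (fst (ord!k), snd (ord!k)) = 0 \<and> \<bar>\<phi> k\<bar> \<le> pi/4" if "k < T n" for k
  proof -
    obtain i j where ij: "ord ! k = (i,j)" by fastforce
    have c: "As (Suc k) = ctrans (rot n i j (\<phi> k) (\<alpha> k)) * As k * rot n i j (\<phi> k) (\<alpha> k) \<and>
      As (Suc k) $$ (i, j) = 0 \<and> - (pi / 4) \<le> \<phi> k \<and> \<phi> k \<le> pi / 4"
      using ak[OF that] unfolding ij Let_def prod.case .
    then have "- (pi / 4) \<le> \<phi> k" "\<phi> k \<le> pi / 4" by blast+
    then have "\<bar>\<phi> k\<bar> \<le> pi/4" unfolding abs_le_iff by linarith
    then show ?thesis using c unfolding ij fst_conv snd_conv by blast
  qed
  have herm: "hermitian_mat n (As k)" if "k \<le> T n" for k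
    using that
  proof (induction k)
    case 0 then show ?case using a0 H by simp
  next
    case (Suc k)
    then show ?case using ak'[of k] prod_herm[OF Suc.IH rot_dim(1)] by simp
  qed
  show ?thesis
  proof (rule that[of As])
    show "As 0 = A" "As (T n) = A'" by fact+
    show "hermitian_mat n (As k)" if "k \<le> T n" for k using herm that by simp
    show "stepr n (\<lambda>r t. As k $$ (r,t)) (\<lambda>r t. As (Suc k) $$ (r,t)) (fst (ord!k)) (snd (ord!k)) \<and>
          stepr n (\<lambda>r t. As (Suc k) $$ (r,t)) (\<lambda>r t. As k $$ (r,t)) (fst (ord!k)) (snd (ord!k))" if "k < T n" for k
      using rot_step[OF herm[of k] _ _ _ conjunct1[OF ak'[OF that]]] V[OF that] ak'[OF that] that by simp
    show "As (Suc k) $$ (fst (ord!k), snd (ord!k)) = 0" if "k < T n" for k using ak'[OF that] by blast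
    have tel: "off2 (As k) = off2 (As 0) - 2 * (\<Sum>l<k. (cmod (As l $$ (fst (ord!l), snd (ord!l))))^2)" if "k \<le> T n" for k
      using that
    proof (induction k)
      case 0 then show ?case by simp
    next
      case (Suc k)
      have kn: "k < T n" using Suc.prems by simp
      have e2: "As (Suc k) $$ (fst (ord!k), snd (ord!k)) = 0" using ak'[OF kn] by blast
      have "off2 (As (Suc k)) = off2 (As k) - 2 * (cmod (As k $$ (fst (ord!k), snd (ord!k))))^2
          + 2 * (cmod (As (Suc k) $$ (fst (ord!k), snd (ord!k))))^2"
        by (rule rot_energy[OF herm[of k] _ _ conjunct1[OF ak'[OF kn]]]) (use V[OF kn] kn in auto)
      then have "off2 (As (Suc k)) = off2 (As k) - 2 * (cmod (As k $$ (fst (ord!k), snd (ord!k))))^2"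
        unfolding e2 by simp
      then show ?case using Suc by simp
    qed
    show "off2 (As (T n)) = off2 (As 0) - 2 * (\<Sum>k<T n. (cmod (As k $$ (fst (ord!k), snd (ord!k))))^2)"
      using tel[of "T n"] by simp
  qed
qed

definition Rf :: "bool \<Rightarrow> nat \<Rightarrow> nat \<Rightarrow> nat" where "Rf b n x = (if b then n - 1 - x else x)"
definition rfp :: "bool \<Rightarrow> nat \<Rightarrow> nat \<times> nat \<Rightarrow> nat \<times> nat" where
  "rfp b n q = (if b then (n - 1 - snd q, n - 1 - fst q) else q)"

lemma Rf_lt: "x < n \<Longrightarrow> Rf b n x < n" by (auto simp: Rf_def)
lemma Rf_inv: "x < n \<Longrightarrow> Rf b n (Rf b n x) = x" by (auto simp: Rf_def)

lemma stepr_Rf: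
  assumes "stepr n X Y i j" "i < n" "j < n"
  shows "stepr n (\<lambda>r t. X (Rf b n r) (Rf b n t)) (\<lambda>r t. Y (Rf b n r) (Rf b n t)) (fst (rfp b n (i,j))) (snd (rfp b n (i,j)))"
proof (cases b)
  case True
  then show ?thesis using stepr_refl[OF assms] stepr_sym by (simp add: Rf_def rfp_def)
next
  case False
  then show ?thesis using assms(1) by (simp add: Rf_def rfp_def)
qed

lemma Rf_pair: "i < n \<Longrightarrow> j < n \<Longrightarrow> (Rf b n (fst (rfp b n (i,j))), Rf b n (snd (rfp b n (i,j)))) = (if b then (j,i) else (i,j))"
  by (auto simp: Rf_def rfp_def)

lemma generic:
  fixes As :: "nat \<Rightarrow> complex mat"
  assumes herm: "\<And>k. k \<le> T n \<Longrightarrow> hermitian_mat n (As k)"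
    and stp: "\<And>k. k < T n \<Longrightarrow> stepr n (\<lambda>r t. As k $$ (r,t)) (\<lambda>r t. As (Suc k) $$ (r,t)) (fst (ord!k)) (snd (ord!k)) \<and>
                      stepr n (\<lambda>r t. As (Suc k) $$ (r,t)) (\<lambda>r t. As k $$ (r,t)) (fst (ord!k)) (snd (ord!k))"
    and zero: "\<And>k. k < T n \<Longrightarrow> As (Suc k) $$ (fst (ord!k), snd (ord!k)) = 0"
    and V: "\<And>k. k < T n \<Longrightarrow> fst (ord!k) < snd (ord!k) \<and> snd (ord!k) < n"
    and tau: "\<And>s. 1 \<le> s \<Longrightarrow> s < n \<Longrightarrow> distinct (\<tau> s) \<and> set (\<tau> s) = {0..<s}"
    and prH: "\<And>s m. 1 \<le> s \<Longrightarrow> s < n \<Longrightarrow> m < s \<Longrightarrow>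
                 rfp b n (ord ! (if rv then T n - 1 - (T s + m) else T s + m)) = (\<tau> s ! m, s)"
  shows "\<And>r t. r < n \<Longrightarrow> t < n \<Longrightarrow> r \<noteq> t \<Longrightarrow>
     cmod (As (if rv then T n else 0) $$ (r,t)) \<le> Ccore n * sqrt (\<Sum>k<T n. (cmod (As k $$ (fst (ord!k), snd (ord!k))))^2)"
proof -
  define S where "S = (\<Sum>k<T n. (cmod (As k $$ (fst (ord!k), snd (ord!k))))^2)"
  define p where "p = sqrt S"
  define tm where "tm k = (if rv then T n - k else k)" for k
  define ix where "ix k = (if rv then T n - 1 - k else k)" for k
  define B where "B k r t = As (tm k) $$ (Rf b n r, Rf b n t)" for k r t
  define pr where "pr k = rfp b n (ord ! ix k)" for k
  have pk: "cmod (As k $$ (fst (ord!k), snd (ord!k))) \<le> p" if "k < T n" for k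
  proof -
    have "(cmod (As k $$ (fst (ord!k), snd (ord!k))))^2 \<le> S"
      unfolding S_def by (rule member_le_sum[where f = "\<lambda>k. (cmod (As k $$ (fst (ord!k), snd (ord!k))))^2"]) (use that in auto)
    then show ?thesis unfolding p_def by (simp add: real_le_rsqrt)
  qed
  have p0: "p \<ge> 0" unfolding p_def S_def by (simp add: sum_nonneg)
  have core: "core_setup n B \<tau> pr p"
  proof
    show "distinct (\<tau> s) \<and> set (\<tau> s) = {0..<s}" if "1 \<le> s" "s < n" for s using tau that by blast
    show "pr (T s + m) = (\<tau> s ! m, s)" if "1 \<le> s" "s < n" "m < s" for s m
      using prH[OF that] by (simp add: pr_def ix_def)
    show "p \<ge> 0" by (rule p0)
    show "cmod (B k t r) = cmod (B k r t)" if "k \<le> T n" "r < n" "t < n" for k r t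
    proof -
      have "tm k \<le> T n" using that by (auto simp: tm_def)
      then show ?thesis unfolding B_def using herm_cmod[OF herm Rf_lt Rf_lt] that by blast
    qed
  next
    fix k assume k: "k < T n"
    have k': "ix k < T n" using k by (auto simp: ix_def)
    obtain i j where ij: "ord ! ix k = (i,j)" by fastforce
    have ijn: "i < n" "j < n" "i < j" using V[OF k'] ij by auto
    have f1: "stepr n (\<lambda>r t. As (ix k) $$ (r,t)) (\<lambda>r t. As (Suc (ix k)) $$ (r,t)) i j"
      and f2: "stepr n (\<lambda>r t. As (Suc (ix k)) $$ (r,t)) (\<lambda>r t. As (ix k) $$ (r,t)) i j"
      using stp[OF k'] ij by auto
    note g1 = stepr_Rf[OF f1 ijn(1,2), of b] and g2 = stepr_Rf[OF f2 ijn(1,2), of b]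
    have tms: "(tm k = ix k \<and> tm (Suc k) = Suc (ix k)) \<or> (tm k = Suc (ix k) \<and> tm (Suc k) = ix k)"
      using k by (auto simp: tm_def ix_def)
    have prk: "pr k = rfp b n (i,j)" using ij by (simp add: pr_def)
    show "stepr n (B k) (B (Suc k)) (fst (pr k)) (snd (pr k)) \<and> stepr n (B (Suc k)) (B k) (fst (pr k)) (snd (pr k))"
      using tms g1 g2 unfolding prk B_def by (elim disjE conjE) (simp_all add: fun_eq_iff)
    have e: "(Rf b n (fst (pr k)), Rf b n (snd (pr k))) = (if b then (j,i) else (i,j))"
      unfolding prk by (rule Rf_pair[OF ijn(1,2)])
    have piv1: "cmod (As q $$ (Rf b n (fst (pr k)), Rf b n (snd (pr k)))) = cmod (As q $$ (i,j))"
      if "q \<le> T n" for q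
      unfolding e using herm_cmod[OF herm[OF that] ijn(2,1)] by auto
    have "cmod (As (ix k) $$ (i,j)) \<le> p" using pk[OF k'] ij by simp
    moreover have "cmod (As (Suc (ix k)) $$ (i,j)) \<le> p" using zero[OF k'] ij p0 by simp
    moreover have "tm k \<le> T n" "tm (Suc k) \<le> T n" "ix k \<le> T n" "Suc (ix k) \<le> T n" using k k' by (auto simp: tm_def)
    ultimately show "cmod (B k (fst (pr k)) (snd (pr k))) \<le> p \<and> cmod (B (Suc k) (fst (pr k)) (snd (pr k))) \<le> p"
      unfolding B_def using tms piv1 by (elim disjE conjE) simp_all
  qed
  fix r t assume rt: "r < n" "t < n" "r \<noteq> t"
  have "Rf b n r < n" "Rf b n t < n" "Rf b n r \<noteq> Rf b n t" using rt by (auto simp: Rf_def)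
  from core_setup.final[OF core this]
  have "cmod (B 0 (Rf b n r) (Rf b n t)) \<le> Ccore n * p" .
  then show "cmod (As (if rv then T n else 0) $$ (r,t)) \<le> Ccore n * sqrt (\<Sum>k<T n. (cmod (As k $$ (fst (ord!k), snd (ord!k))))^2)"
    unfolding B_def tm_def p_def S_def using Rf_inv rt by (cases rv) simp_all
qed

lemma Ccore_nonneg: "Ccore n \<ge> 0"
  unfolding Ccore_def cc_def using Mb_nonneg by (intro sum_nonneg) (auto intro!: mult_nonneg_nonneg add_nonneg_nonneg)

lemma off2_nonneg: "off2 M \<ge> 0"
  unfolding off2_def by (intro sum_nonneg) auto

lemma off2_bound:
  assumes M: "M \<in> carrier_mat n n" and c: "c \<ge> 0"
    and b: "\<And>r t. r < n \<Longrightarrow> t < n \<Longrightarrow> r \<noteq> t \<Longrightarrow> cmod (M $$ (r,t)) \<le> c"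
  shows "off2 M \<le> real n * real n * c^2"
proof -
  have "off2 M = (\<Sum>r<n. \<Sum>t<n. if r = t then 0 else (cmod (M $$ (r,t)))^2)" by (rule off2_sum[OF M])
  also have "\<dots> \<le> (\<Sum>r<n. \<Sum>t<n. c^2)"
  proof (intro sum_mono)
    fix r t assume "r \<in> {..<n}" "t \<in> {..<n}"
    then show "(if r = t then 0 else (cmod (M $$ (r,t)))^2) \<le> c^2"
      using b[of r t] c by (auto intro: power_mono)
  qed
  also have "\<dots> = real n * real n * c^2" by simp
  finally show ?thesis .
qed

lemma arith_gap:
  fixes x y D S :: real
  assumes "x \<le> C" "(D + 2) * y - x * (D + 4) = 2 * (C - x)"
  shows "x * (D + 4) \<le> (D + 2) * y"
proof -
  have "0 \<le> 2 * (C - x)" using assms(1) by simp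
  then have "0 \<le> (D + 2) * y - x * (D + 4)" using assms(2) by simp
  then show ?thesis by simp
qed

lemma main_case:
  assumes H: "hermitian_mat n A" and J: "jacobi_sweep n ord A A'"
    and V: "\<And>k. k < T n \<Longrightarrow> fst (ord!k) < snd (ord!k) \<and> snd (ord!k) < n"
    and tau: "\<And>s. 1 \<le> s \<Longrightarrow> s < n \<Longrightarrow> distinct (\<tau> s) \<and> set (\<tau> s) = {0..<s}"
    and prH: "\<And>s m. 1 \<le> s \<Longrightarrow> s < n \<Longrightarrow> m < s \<Longrightarrow>
                 rfp b n (ord ! (if rv then T n - 1 - (T s + m) else T s + m)) = (\<tau> s ! m, s)"
  shows "off2 A' \<le> (real n * real n * (Ccore n)^2 + 2) / (real n * real n * (Ccore n)^2 + 4) * off2 A"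
proof -
  define D where "D = real n * real n * (Ccore n)^2"
  have D0: "D \<ge> 0" unfolding D_def by simp
  show ?thesis
  proof (rule sweep_facts[OF H J V])
  fix As assume a0: "As 0 = A" and aN: "As (T n) = A'" and herm: "\<And>k. k \<le> T n \<Longrightarrow> hermitian_mat n (As k)"
    and stp: "\<And>k. k < T n \<Longrightarrow> stepr n (\<lambda>r t. As k $$ (r,t)) (\<lambda>r t. As (Suc k) $$ (r,t)) (fst (ord!k)) (snd (ord!k)) \<and>
                      stepr n (\<lambda>r t. As (Suc k) $$ (r,t)) (\<lambda>r t. As k $$ (r,t)) (fst (ord!k)) (snd (ord!k))"
    and zero: "\<And>k. k < T n \<Longrightarrow> As (Suc k) $$ (fst (ord!k), snd (ord!k)) = 0"
    and en: "off2 (As (T n)) = off2 (As 0) - 2 * (\<Sum>k<T n. (cmod (As k $$ (fst (ord!k), snd (ord!k))))^2)"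
  define S where "S = (\<Sum>k<T n. (cmod (As k $$ (fst (ord!k), snd (ord!k))))^2)"
  have S0: "S \<ge> 0" unfolding S_def by (simp add: sum_nonneg)
  note g = generic[OF herm stp zero V tau prH]
  define M where "M = As (if rv then T n else 0)"
  have Mc: "M \<in> carrier_mat n n" using herm[of "if rv then T n else 0"] unfolding M_def hermitian_mat_def by auto
  have "off2 M \<le> real n * real n * (Ccore n * sqrt S)^2"
  proof (rule off2_bound[OF Mc])
    show "0 \<le> Ccore n * sqrt S" using Ccore_nonneg S0 by simp
  qed (use g in \<open>auto simp: M_def S_def\<close>)
  also have "\<dots> = D * S" unfolding D_def using S0 by (simp add: power_mult_distrib)
  finally have MD: "off2 M \<le> D * S" .
  have en': "off2 A' = off2 A - 2 * S" using en a0 aN S_def by simp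
  have oA: "off2 A \<ge> 0" "off2 A' \<ge> 0" by (rule off2_nonneg)+
  have DS: "D * S \<le> (D + 2) * S" "(D + 2) * S \<le> (D + 4) * S" using S0 by (simp_all add: mult_right_mono)
  have key: "off2 A' * (D + 4) \<le> (D + 2) * off2 A"
  proof (cases rv)
    case True
    then have "off2 A' \<le> D * S" using MD aN by (simp add: M_def)
    then have le: "off2 A' \<le> (D + 2) * S" using DS by linarith
    show ?thesis
      by (rule arith_gap[OF le]) (simp add: en' algebra_simps)
  next
    case False
    then have "off2 A \<le> D * S" using MD a0 by (simp add: M_def)
    then have le: "off2 A \<le> (D + 4) * S" using DS by linarith
    have le2: "off2 A' \<le> off2 A' + ((D + 4) * S - off2 A)" using le by simp
    show ?thesis
      by (rule arith_gap[OF le2]) (simp add: en' algebra_simps)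
  qed
  have "off2 A' \<le> (D + 2) * off2 A / (D + 4)" using key D0 by (simp add: pos_le_divide_eq)
  then show ?thesis unfolding D_def by simp
  qed
qed

lemma V_from:
  assumes P: "\<And>s m. 1 \<le> s \<Longrightarrow> s < n \<Longrightarrow> m < s \<Longrightarrow> ord ! (T s + m) = Q s m"
    and Q: "\<And>s m. 1 \<le> s \<Longrightarrow> s < n \<Longrightarrow> m < s \<Longrightarrow> fst (Q s m) < snd (Q s m) \<and> snd (Q s m) < n"
    and k: "k < T n"
  shows "fst (ord ! k) < snd (ord ! k) \<and> snd (ord ! k) < n"
proof -
  obtain s m where sm: "1 \<le> s" "s < n" "m < s" "k = T s + m" using T_decomp[OF k] by blast
  then show ?thesis using P[OF sm(1-3)] Q[OF sm(1-3)] by simp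
qed

lemma V_from_rev:
  assumes len: "length os = T n"
    and P: "\<And>s m. 1 \<le> s \<Longrightarrow> s < n \<Longrightarrow> m < s \<Longrightarrow> os ! (T s + m) = Q s m"
    and Q: "\<And>s m. 1 \<le> s \<Longrightarrow> s < n \<Longrightarrow> m < s \<Longrightarrow> fst (Q s m) < snd (Q s m) \<and> snd (Q s m) < n"
    and k: "k < T n"
  shows "fst (rev os ! k) < snd (rev os ! k) \<and> snd (rev os ! k) < n"
proof -
  have "rev os ! k = os ! (T n - Suc k)" using rev_nth[of k os] len k by simp
  moreover have "T n - Suc k < T n" using k by simp
  ultimately show ?thesis using V_from[OF P Q, of "T n - Suc k"] by simp
qed

lemma rev_back:
  assumes len: "length os = T n" and sm: "1 \<le> s" "s < n" "m < s"
  shows "rev os ! (T n - 1 - (T s + m)) = os ! (T s + m)"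
proof -
  have "T s + m < T (Suc s)" using sm by (simp add: T_Suc)
  also have "\<dots> \<le> T n" using sm by (intro T_mono) simp
  finally have lt: "T s + m < T n" .
  then show ?thesis using rev_nth[of "T n - 1 - (T s + m)" os] len by simp
qed

lemma tau_lt_gen: assumes "distinct xs \<and> set xs = {0..<s}" "m < s" shows "xs ! m < s"
proof -
  have "length xs = s" using assms(1) distinct_card[of xs] by simp
  then have "xs ! m \<in> set xs" using assms(2) by simp
  then show ?thesis using assms(1) by simp
qed

theorem corollary3p4:
  fixes n :: nat
  assumes "n \<ge> 2"
  shows "\<exists>\<gamma>::real. 0 \<le> \<gamma> \<and> \<gamma> < 1 \<and>
           (\<forall>A ord A'. hermitian_mat n A \<longrightarrow> ord \<in> C_sp n \<longrightarrow> jacobi_sweep n ord A A' \<longrightarrow>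
              off2 A' \<le> \<gamma> * off2 A)"
proof -
  define D where "D = real n * real n * (Ccore n)^2"
  have D0: "D \<ge> 0" unfolding D_def by simp
  show ?thesis
  proof (intro exI[of _ "(D + 2) / (D + 4)"] conjI allI impI)
    show "0 \<le> (D + 2) / (D + 4)" using D0 by simp
    show "(D + 2) / (D + 4) < 1" using D0 by simp
    fix A ord A' assume H: "hermitian_mat n A" and O: "ord \<in> C_sp n" and J: "jacobi_sweep n ord A A'"
    have n1: "n \<ge> 1" using assms by simp
    have "ord \<in> C_c n \<or> ord \<in> rev ` C_c n \<or> ord \<in> C_r n \<or> ord \<in> rev ` C_r n" using O unfolding C_sp_def by blast
    then show "off2 A' \<le> (D + 2) / (D + 4) * off2 A"
    proof (elim disjE)
      assume oc: "ord \<in> C_c n"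
      obtain \<tau> where t: "\<And>s. distinct (\<tau> s) \<and> set (\<tau> s) = {0..<s}" and len: "length ord = T n"
        and P: "\<And>s m. 1 \<le> s \<Longrightarrow> s < n \<Longrightarrow> m < s \<Longrightarrow> ord ! (T s + m) = (\<tau> s ! m, s)"
        using Cc_struct[OF oc] by blast
      have V: "fst (ord ! k) < snd (ord ! k) \<and> snd (ord ! k) < n" if "k < T n" for k
      proof (rule V_from[OF P _ that])
        fix s m assume "1 \<le> s" "s < n" "m < s"
        then show "fst (\<tau> s ! m, s) < snd (\<tau> s ! m, s) \<and> snd (\<tau> s ! m, s) < n"
          using tau_lt_gen[OF t[of s], of m] by simp
      qed
      have prH: "rfp False n (ord ! (if False then T n - 1 - (T s + m) else T s + m)) = (\<tau> s ! m, s)"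
        if "1 \<le> s" "s < n" "m < s" for s m
        using P[OF that] by (simp add: rfp_def)
      have "off2 A' \<le> (real n * real n * (Ccore n)^2 + 2) / (real n * real n * (Ccore n)^2 + 4) * off2 A"
        by (rule main_case[OF H J V, of \<tau> False False]) (use t prH in blast)+
      then show ?thesis unfolding D_def .
    next
      assume "ord \<in> rev ` C_c n"
      then obtain os where oc: "os \<in> C_c n" and oo: "ord = rev os" by blast
      obtain \<tau> where t: "\<And>s. distinct (\<tau> s) \<and> set (\<tau> s) = {0..<s}" and len: "length os = T n"
        and P: "\<And>s m. 1 \<le> s \<Longrightarrow> s < n \<Longrightarrow> m < s \<Longrightarrow> os ! (T s + m) = (\<tau> s ! m, s)"
        using Cc_struct[OF oc] by blast
      have V: "fst (ord ! k) < snd (ord ! k) \<and> snd (ord ! k) < n" if "k < T n" for k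
        unfolding oo
      proof (rule V_from_rev[OF len P _ that])
        fix s m assume "1 \<le> s" "s < n" "m < s"
        then show "fst (\<tau> s ! m, s) < snd (\<tau> s ! m, s) \<and> snd (\<tau> s ! m, s) < n"
          using tau_lt_gen[OF t[of s], of m] by simp
      qed
      have prH: "rfp False n (ord ! (if True then T n - 1 - (T s + m) else T s + m)) = (\<tau> s ! m, s)"
        if "1 \<le> s" "s < n" "m < s" for s m
        using rev_back[OF len that] P[OF that] unfolding oo by (simp add: rfp_def)
      have "off2 A' \<le> (real n * real n * (Ccore n)^2 + 2) / (real n * real n * (Ccore n)^2 + 4) * off2 A"
        by (rule main_case[OF H J V, of \<tau> False True]) (use t prH in blast)+
      then show ?thesis unfolding D_def .
    next
      assume oc: "ord \<in> C_r n"
      obtain \<tau> where t: "\<And>s. 1 \<le> s \<Longrightarrow> s < n \<Longrightarrow> distinct (\<tau> s) \<and> set (\<tau> s) = {0..<s}" and len: "length ord = T n"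
        and P: "\<And>s m. 1 \<le> s \<Longrightarrow> s < n \<Longrightarrow> m < s \<Longrightarrow> ord ! (T s + m) = (n-1-s, n-1-(\<tau> s ! m))"
        using Cr_struct[OF oc] by blast
      have V: "fst (ord ! k) < snd (ord ! k) \<and> snd (ord ! k) < n" if "k < T n" for k
      proof (rule V_from[OF P _ that])
        fix s m assume sm: "1 \<le> s" "s < n" "m < s"
        have "\<tau> s ! m < s" using tau_lt_gen[OF t[OF sm(1,2)] sm(3)] .
        then show "fst (n-1-s, n-1-(\<tau> s ! m)) < snd (n-1-s, n-1-(\<tau> s ! m)) \<and> snd (n-1-s, n-1-(\<tau> s ! m)) < n"
          using sm by simp
      qed
      have prH: "rfp True n (ord ! (if False then T n - 1 - (T s + m) else T s + m)) = (\<tau> s ! m, s)"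
        if "1 \<le> s" "s < n" "m < s" for s m
        using P[OF that] tau_lt_gen[OF t[OF that(1,2)] that(3)] that by (simp add: rfp_def)
      have "off2 A' \<le> (real n * real n * (Ccore n)^2 + 2) / (real n * real n * (Ccore n)^2 + 4) * off2 A"
        by (rule main_case[OF H J V, of \<tau> True False]) (use t prH in blast)+
      then show ?thesis unfolding D_def .
    next
      assume "ord \<in> rev ` C_r n"
      then obtain os where oc: "os \<in> C_r n" and oo: "ord = rev os" by blast
      obtain \<tau> where t: "\<And>s. 1 \<le> s \<Longrightarrow> s < n \<Longrightarrow> distinct (\<tau> s) \<and> set (\<tau> s) = {0..<s}" and len: "length os = T n"
        and P: "\<And>s m. 1 \<le> s \<Longrightarrow> s < n \<Longrightarrow> m < s \<Longrightarrow> os ! (T s + m) = (n-1-s, n-1-(\<tau> s ! m))"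
        using Cr_struct[OF oc] by blast
      have V: "fst (ord ! k) < snd (ord ! k) \<and> snd (ord ! k) < n" if "k < T n" for k
        unfolding oo
      proof (rule V_from_rev[OF len P _ that])
        fix s m assume sm: "1 \<le> s" "s < n" "m < s"
        have "\<tau> s ! m < s" using tau_lt_gen[OF t[OF sm(1,2)] sm(3)] .
        then show "fst (n-1-s, n-1-(\<tau> s ! m)) < snd (n-1-s, n-1-(\<tau> s ! m)) \<and> snd (n-1-s, n-1-(\<tau> s ! m)) < n"
          using sm by simp
      qed
      have prH: "rfp True n (ord ! (if True then T n - 1 - (T s + m) else T s + m)) = (\<tau> s ! m, s)"
        if "1 \<le> s" "s < n" "m < s" for s m
        using rev_back[OF len that] P[OF that] tau_lt_gen[OF t[OF that(1,2)] that(3)] that unfolding oo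
        by (simp add: rfp_def)
      have "off2 A' \<le> (real n * real n * (Ccore n)^2 + 2) / (real n * real n * (Ccore n)^2 + 4) * off2 A"
        by (rule main_case[OF H J V, of \<tau> True True]) (use t prH in blast)+
      then show ?thesis unfolding D_def .
    qed
  qed
qed


end
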